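(* Let $t\ge 2$ and let $\mathscr{C}$ be a $(t,1)_q$ generalized merge-convertible code over $\mathbb{F}_q$ with initial codes $\mathcal{C}^{I_1},\dots,\mathcal{C}^{I_t}$ (where $\mathcal{C}^{I_i}$ is an $[n_{I_i},k_{I_i}]_q$ code) and final code $\mathcal{C}^F$ (an $[n_F,k_F]_q$ code). Assume that $\mathcal{C}^F$ has $(r,\delta)$-locality and let $d_F$ denote its minimum distance. Then for every $i\in[t]$, the set $\mathcal{U}_i$ of unchanged symbols of $\mathcal{C}^{I_i}$ satisfies $$|\mathcal{U}_i|\le k_{I_i}+n_F-k_F-d_F+1-\left(\left\lceil \frac{k_F-k_{I_i}}{r}\right\rceil-1\right)(\delta-1).$$
   Context: All codes are linear over the finite field $\mathbb{F}_q$; $[n]=\{1,\dots,n\}$. A $(t,1)_q$ generalized convertible code (called a generalized merge-convertible code when $t>1$) consists of $t$ initial linear codes $\mathcal{C}^{I_1},\dots,\mathcal{C}^{I_t}$, where $\mathcal{C}^{I_i}$ is an $[n_{I_i},k_{I_i}]_q$ code, a final linear $[n_F,k_F]_q$ code $\mathcal{C}^F$ with $k_F=\sum_{i=1}^t k_{I_i}$, and a linear bijection $\phi:\mathcal{C}^{I_1}\times\cdots\times\mathcal{C}^{I_t}\to\mathcal{C}^F$. The conversion comes with the following data: for each $i$, a set $\mathcal{U}_i$ of coordinates of $\mathcal{C}^{I_i}$ (unchanged symbols) together with an injective assignment of each $u\in\mathcal{U}_i$ to a coordinate of $\mathcal{C}^F$, images of different pairs $(i,u)$ being distinct, such that for all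 $(c_1,\dots,c_t)$ the coordinate of $\phi(c_1,\dots,c_t)$ assigned to $u$ equals the $u$-th coordinate of $c_i$; $\mathcal{W}$ is the set of coordinates of $\mathcal{C}^F$ not assigned to any unchanged symbol (written symbols); and for each $i$ a set $\mathcal{R}_i$ of coordinates of $\mathcal{C}^{I_i}$ (read symbols) such that $\phi(c_1,\dots,c_t)|_{\mathcal{W}}$ is a function of $(c_1|_{\mathcal{R}_1},\dots,c_t|_{\mathcal{R}_t})$. A code $\mathcal{C}\subseteq\mathbb{F}_q^n$ has $(r,\delta)$-locality (with $r\ge1$, $\delta\ge 2$) if every coordinate $i\in[n]$ lies in a subset $J_i\subseteq[n]$ with $|J_i|\le r+\delta-1$ such that the punctured code $\mathcal{C}|_{J_i}$ has minimum distance at least $\delta$. *)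

theory Defs
  imports Complex_Main "HOL-Library.Function_Algebras"
begin

text \<open>Vectors of length n over the field 'a are functions nat => 'a vanishing
outside the coordinate set {0..<n} (coordinates are 0-indexed).\<close>

definition vscale :: "'a::field \<Rightarrow> (nat \<Rightarrow> 'a) \<Rightarrow> (nat \<Rightarrow> 'a)" where
  "vscale c v = (\<lambda>j. c * v j)"

definition hdist :: "(nat \<Rightarrow> 'a::zero) \<Rightarrow> (nat \<Rightarrow> 'a) \<Rightarrow> nat" where
  "hdist x y = card {j. x j \<noteq> y j}"

definition lin_code :: "nat \<Rightarrow> nat \<Rightarrow> (nat \<Rightarrow> 'a::field) set \<Rightarrow> bool" where
  "lin_code n k C \<longleftrightarrow>
     (\<forall>c\<in>C. \<forall>j. n \<le> j \<longrightarrow> c j = 0) \<and>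
     0 \<in> C \<and> (\<forall>x\<in>C. \<forall>y\<in>C. x + y \<in> C) \<and> (\<forall>a. \<forall>x\<in>C. vscale a x \<in> C) \<and>
     vector_space.dim vscale C = k"

text \<open>Minimum (Hamming) distance of a code with at least two codewords.\<close>
definition min_dist :: "(nat \<Rightarrow> 'a::zero) set \<Rightarrow> nat" where
  "min_dist C = Min {hdist x y | x y. x \<in> C \<and> y \<in> C \<and> x \<noteq> y}"

text \<open>Minimum distance at least delta (vacuous for codes with one codeword,
whose minimum distance is conventionally infinite).\<close>
definition min_dist_ge :: "(nat \<Rightarrow> 'a::zero) set \<Rightarrow> nat \<Rightarrow> bool" where
  "min_dist_ge C \<delta> \<longleftrightarrow> (\<forall>x\<in>C. \<forall>y\<in>C. x \<noteq> y \<longrightarrow> \<delta> \<le> hdist x y)"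

definition puncture :: "nat set \<Rightarrow> (nat \<Rightarrow> 'a::zero) set \<Rightarrow> (nat \<Rightarrow> 'a) set" where
  "puncture J C = (\<lambda>c. \<lambda>j. if j \<in> J then c j else 0) ` C"

definition has_locality :: "nat \<Rightarrow> (nat \<Rightarrow> 'a::zero) set \<Rightarrow> nat \<Rightarrow> nat \<Rightarrow> bool" where
  "has_locality n C r \<delta> \<longleftrightarrow>
     (\<forall>i<n. \<exists>J. i \<in> J \<and> J \<subseteq> {0..<n} \<and> card J \<le> r + \<delta> - 1 \<and>
              min_dist_ge (puncture J C) \<delta>)"

text \<open>Tuples (c_1,...,c_t) of initial codewords: functions i => codeword,
with c_i in C^{I_i} for i in {1..t} and c_i = 0 otherwise.\<close>
definition tuples :: "nat \<Rightarrow> (nat \<Rightarrow> (nat \<Rightarrow> 'a::zero) set) \<Rightarrow> (nat \<Rightarrow> nat \<Rightarrow> 'a) set" where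
  "tuples t CI = {c. (\<forall>i\<in>{1..t}. c i \<in> CI i) \<and> (\<forall>i. i \<notin> {1..t} \<longrightarrow> c i = 0)}"

text \<open>A (t,1)_q generalized convertible code with conversion data
  phi (linear bijection), U (unchanged symbols), sigma (their assignment to
  coordinates of the final code), W (written symbols), R (read symbols).\<close>
definition gen_conv_code ::
  "nat \<Rightarrow> (nat \<Rightarrow> nat) \<Rightarrow> (nat \<Rightarrow> nat) \<Rightarrow> (nat \<Rightarrow> (nat \<Rightarrow> 'a::field) set) \<Rightarrow>
   nat \<Rightarrow> nat \<Rightarrow> (nat \<Rightarrow> 'a) set \<Rightarrow>
   ((nat \<Rightarrow> nat \<Rightarrow> 'a) \<Rightarrow> (nat \<Rightarrow> 'a)) \<Rightarrow>
   (nat \<Rightarrow> nat set) \<Rightarrow> (nat \<Rightarrow> nat \<Rightarrow> nat) \<Rightarrow> nat set \<Rightarrow> (nat \<Rightarrow> nat set) \<Rightarrow> bool" where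
  "gen_conv_code t nI kI CI nF kF CF \<phi> U \<sigma> W R \<longleftrightarrow>
     t \<ge> 1 \<and>
     (\<forall>i\<in>{1..t}. lin_code (nI i) (kI i) (CI i)) \<and>
     lin_code nF kF CF \<and>
     kF = (\<Sum>i=1..t. kI i) \<and>
     (\<forall>c\<in>tuples t CI. \<forall>d\<in>tuples t CI. \<phi> (c + d) = \<phi> c + \<phi> d) \<and>
     (\<forall>a. \<forall>c\<in>tuples t CI. \<phi> (\<lambda>i. vscale a (c i)) = vscale a (\<phi> c)) \<and>
     bij_betw \<phi> (tuples t CI) CF \<and>
     (\<forall>i\<in>{1..t}. U i \<subseteq> {0..<nI i}) \<and>
     (\<forall>i\<in>{1..t}. \<forall>u\<in>U i. \<sigma> i u < nF) \<and>
     (\<forall>i\<in>{1..t}. \<forall>j\<in>{1..t}. \<forall>u\<in>U i. \<forall>v\<in>U j. \<sigma> i u = \<sigma> j v \<longrightarrow> i = j \<and> u = v) \<and>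
     (\<forall>c\<in>tuples t CI. \<forall>i\<in>{1..t}. \<forall>u\<in>U i. \<phi> c (\<sigma> i u) = c i u) \<and>
     W = {0..<nF} - (\<Union>i\<in>{1..t}. \<sigma> i ` U i) \<and>
     (\<forall>i\<in>{1..t}. R i \<subseteq> {0..<nI i}) \<and>
     (\<forall>c\<in>tuples t CI. \<forall>d\<in>tuples t CI.
        (\<forall>i\<in>{1..t}. \<forall>j\<in>R i. c i j = d i j) \<longrightarrow> (\<forall>w\<in>W. \<phi> c w = \<phi> d w))"

end

theory Submission
  imports Defs "HOL-Library.FuncSet"
begin


interpretation vs: vector_space "vscale :: 'a::field \<Rightarrow> (nat \<Rightarrow> 'a) \<Rightarrow> (nat \<Rightarrow> 'a)"
  by unfold_locales (auto simp: vscale_def fun_eq_iff algebra_simps)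

lemma vscale_apply: "vscale a c j = a * c j"
  by (simp add: vscale_def)

definition sub :: "(nat \<Rightarrow> 'a::field) set \<Rightarrow> bool" where
  "sub C \<longleftrightarrow> 0 \<in> C \<and> (\<forall>x\<in>C. \<forall>y\<in>C. x + y \<in> C) \<and> (\<forall>a. \<forall>x\<in>C. vscale a x \<in> C)"

lemma sub_diff: "sub C \<Longrightarrow> x \<in> C \<Longrightarrow> y \<in> C \<Longrightarrow> x - y \<in> C"
proof -
  assume s: "sub C" and x: "x \<in> C" and y: "y \<in> C"
  have "x - y = x + vscale (-1) y" by (simp add: fun_eq_iff vscale_apply)
  thus ?thesis using s x y unfolding sub_def by metis
qed

lemma sub_subspace: "sub C \<Longrightarrow> vs.subspace C"
  unfolding sub_def vs.subspace_def by blast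

lemma card_span:
  fixes B :: "(nat \<Rightarrow> 'a::{finite,field}) set"
  assumes "finite B" "vs.independent B"
  shows "card (vs.span B) = card (UNIV::'a set) ^ card B"
  using assms
proof (induction B rule: finite_induct)
  case empty
  then show ?case by simp
next
  case (insert b B)
  have ibn: "vs.independent B \<and> b \<notin> vs.span B"
    using insert.prems insert.hyps(2) vs.independent_insert[of b B] by simp
  hence ib: "vs.independent B" and nb: "b \<notin> vs.span B" by auto
  let ?f = "\<lambda>(a::'a, x). vscale a b + x"
  have eq: "vs.span (insert b B) = ?f ` (UNIV \<times> vs.span B)"
  proof
    show "vs.span (insert b B) \<subseteq> ?f ` (UNIV \<times> vs.span B)"
    proof
      fix y assume y: "y \<in> vs.span (insert b B)"
      obtain k where k: "y - vscale k b \<in> vs.span B" using y[unfolded vs.span_insert[of b B]] by (elim CollectE exE)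
      have "y = ?f (k, y - vscale k b)" by simp
      thus "y \<in> ?f ` (UNIV \<times> vs.span B)" using k by blast
    qed
  next
    show "?f ` (UNIV \<times> vs.span B) \<subseteq> vs.span (insert b B)"
    proof
      fix y assume "y \<in> ?f ` (UNIV \<times> vs.span B)"
      then obtain a x where y: "y = vscale a b + x" and x: "x \<in> vs.span B" by auto
      have "y - vscale a b \<in> vs.span B" using x y by simp
      thus "y \<in> vs.span (insert b B)" unfolding vs.span_insert[of b B] by (intro CollectI exI)
    qed
  qed
  have inj: "inj_on ?f (UNIV \<times> vs.span B)"
  proof (rule inj_onI, clarify)
    fix a x a' x'
    assume x: "x \<in> vs.span B" and x': "x' \<in> vs.span B" and e: "vscale a b + x = vscale a' b + x'"
    show "a = a' \<and> x = x'"
    proof (cases "a = a'")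
      case True then show ?thesis using e by simp
    next
      case False
      have "vscale (a - a') b = x' - x"
      proof (rule ext)
        fix j
        have "a * b j + x j = a' * b j + x' j" using fun_cong[OF e, of j] unfolding plus_fun_apply vscale_apply .
        thus "vscale (a - a') b j = (x' - x) j" unfolding vscale_apply by (simp add: algebra_simps)
      qed
      hence "vscale (a - a') b \<in> vs.span B" using x x' vs.span_diff by simp
      hence "vscale (inverse (a - a')) (vscale (a - a') b) \<in> vs.span B" by (rule vs.span_scale)
      hence "b \<in> vs.span B" using False by simp
      thus ?thesis using nb by simp
    qed
  qed
  have "card (vs.span (insert b B)) = card ((UNIV::'a set) \<times> vs.span B)"
    using eq inj card_image by metis
  also have "card ((UNIV::'a set) \<times> vs.span B) = card (UNIV::'a set) * card (vs.span B)"
    by (rule card_cartesian_product)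
  finally show ?case using insert.IH ib insert.hyps by simp
qed

lemma card_sub:
  fixes C :: "(nat \<Rightarrow> 'a::{finite,field}) set"
  assumes "finite C" "sub C"
  shows "card C = card (UNIV::'a set) ^ vs.dim C"
proof -
  obtain B where B: "B \<subseteq> C" "vs.independent B" "C \<subseteq> vs.span B" "card B = vs.dim C"
    using vs.basis_exists by blast
  have "vs.span B = C" using vs.span_subspace[OF B(1) B(3) sub_subspace[OF assms(2)]] .
  moreover have "finite B" using B(1) assms(1) finite_subset by blast
  ultimately show ?thesis using card_span B by metis
qed



lemma fiber_bound:
  fixes C K :: "'b::ab_group_add set"
  assumes "finite C" "finite K"
    and "\<And>x y. x \<in> C \<Longrightarrow> y \<in> C \<Longrightarrow> f x = f y \<Longrightarrow> x - y \<in> K"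
  shows "card C \<le> card K * card (f ` C)"
proof -
  have fib: "card {x\<in>C. f x = z} \<le> card K" if z: "z \<in> f ` C" for z
  proof -
    obtain x0 where x0: "x0 \<in> C" "f x0 = z" using z by blast
    have "inj_on (\<lambda>x. x - x0) {x\<in>C. f x = z}" by (rule inj_onI) simp
    moreover have "(\<lambda>x. x - x0) ` {x\<in>C. f x = z} \<subseteq> K" using assms(3) x0 by auto
    ultimately show ?thesis using assms(2) card_inj_on_le by blast
  qed
  have eqC: "C = (\<Union>z\<in>f ` C. {x\<in>C. f x = z})" by blast
  have "card C = card (\<Union>z\<in>f ` C. {x\<in>C. f x = z})" using eqC by (rule arg_cong)
  also have "\<dots> \<le> (\<Sum>z\<in>f ` C. card {x\<in>C. f x = z})"
    by (rule card_UN_le) (rule finite_imageI[OF assms(1)])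
  also have "\<dots> \<le> (\<Sum>z\<in>f ` C. card K)" by (rule sum_mono) (rule fib)
  also have "\<dots> = card K * card (f ` C)" by simp
  finally show ?thesis .
qed

definition supp_in :: "nat set \<Rightarrow> (nat \<Rightarrow> 'a::zero) set \<Rightarrow> bool" where
  "supp_in N C \<longleftrightarrow> (\<forall>c\<in>C. \<forall>j. j \<notin> N \<longrightarrow> c j = 0)"

lemma finite_supp_funs:
  assumes "finite N"
  shows "finite {c :: nat \<Rightarrow> 'a::{finite,zero}. \<forall>j. j \<notin> N \<longrightarrow> c j = 0}"
proof -
  have "{c :: nat \<Rightarrow> 'a. \<forall>j. j \<notin> N \<longrightarrow> c j = 0} \<subseteq>
        (\<lambda>f j. if j \<in> N then f j else 0) ` (PiE N (\<lambda>_. UNIV))"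
  proof
    fix c :: "nat \<Rightarrow> 'a" assume c: "c \<in> {c. \<forall>j. j \<notin> N \<longrightarrow> c j = 0}"
    have "c = (\<lambda>j. if j \<in> N then restrict c N j else 0)" using c by (auto simp: fun_eq_iff)
    moreover have "restrict c N \<in> PiE N (\<lambda>_. UNIV)" by simp
    ultimately show "c \<in> (\<lambda>f j. if j \<in> N then f j else 0) ` (PiE N (\<lambda>_. UNIV))" by blast
  qed
  moreover have "finite (PiE N (\<lambda>_. UNIV :: 'a set))" using assms by (simp add: finite_PiE)
  ultimately show ?thesis using finite_subset by blast
qed

lemma finite_supp_in:
  fixes C :: "(nat \<Rightarrow> 'a::{finite,zero}) set"
  shows "finite N \<Longrightarrow> supp_in N C \<Longrightarrow> finite C"
  using finite_supp_funs[of N] unfolding supp_in_def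
  by (rule finite_subset[rotated]) auto

lemma card_field_ge2: "2 \<le> card (UNIV :: 'a::{finite,field} set)"
proof -
  have "{0, 1} \<subseteq> (UNIV :: 'a set)" by simp
  hence "card {0::'a, 1} \<le> card (UNIV :: 'a set)" by (rule card_mono[OF finite_UNIV])
  thus ?thesis by simp
qed

lemma singleton_bound:
  fixes C :: "(nat \<Rightarrow> 'a::{finite,field}) set"
  assumes "sub C" "finite N" "supp_in N C" "card C = card (UNIV::'a set) ^ k" "k \<ge> 1"
  shows "\<exists>c\<in>C. c \<noteq> 0 \<and> card {j. c j \<noteq> 0} + k \<le> card N + 1"
proof -
  let ?q = "card (UNIV::'a set)"
  have q2: "?q \<ge> 2" by (rule card_field_ge2)
  have fC: "finite C" using finite_supp_in assms(2,3) .
  have gen: "card C \<le> card {c\<in>C. \<forall>j\<in>T. c j = 0} * ?q ^ card T" if T: "T \<subseteq> N" for T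
  proof -
    let ?K = "{c\<in>C. \<forall>j\<in>T. c j = 0}"
    have fT: "finite T" using T assms(2) finite_subset by blast
    have "card C \<le> card ?K * card ((\<lambda>c. restrict c T) ` C)"
    proof (rule fiber_bound[OF fC])
      show "finite ?K" using fC by simp
      fix x y assume "x \<in> C" "y \<in> C" "restrict x T = restrict y T"
      thus "x - y \<in> ?K" using sub_diff[OF assms(1)] by (auto simp: restrict_apply fun_eq_iff split: if_splits)
    qed
    also have "card ((\<lambda>c. restrict c T) ` C) \<le> card (PiE T (\<lambda>_. UNIV :: 'a set))"
      by (rule card_mono) (auto simp: finite_PiE fT)
    also have "card (PiE T (\<lambda>_. UNIV :: 'a set)) = ?q ^ card T"
      by (simp add: card_PiE fT)
    finally show ?thesis by simp
  qed
  show ?thesis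
  proof (cases "k - 1 \<le> card N")
    case True
    then obtain T where T: "T \<subseteq> N" "card T = k - 1" using obtain_subset_with_card_n by metis
    let ?K = "{c\<in>C. \<forall>j\<in>T. c j = 0}"
    have "?q ^ k \<le> card ?K * ?q ^ (k - 1)" using gen[OF T(1)] T(2) assms(4) by simp
    moreover have "?q ^ k = ?q * ?q ^ (k - 1)" using assms(5) by (metis Suc_diff_1 less_le_trans power_Suc zero_less_one)
    ultimately have "?q \<le> card ?K" using q2 by simp
    hence "card ?K \<ge> 2" using q2 by linarith
    have "\<not> ?K \<subseteq> {0}"
    proof
      assume "?K \<subseteq> {0}"
      hence "card ?K \<le> card {0::nat\<Rightarrow>'a}" by (intro card_mono) auto
      thus False using \<open>card ?K \<ge> 2\<close> by simp
    qed
    then obtain c where c: "c \<in> ?K" "c \<noteq> 0" by blast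
    have "{j. c j \<noteq> 0} \<subseteq> N - T" using c(1) assms(3) unfolding supp_in_def by auto
    hence "card {j. c j \<noteq> 0} \<le> card (N - T)" using assms(2) by (simp add: card_mono)
    also have "card (N - T) = card N - (k - 1)" using T assms(2) by (simp add: card_Diff_subset finite_subset)
    finally have "card {j. c j \<noteq> 0} + k \<le> card N + 1" using True assms(5) by linarith
    thus ?thesis using c by blast
  next
    case False
    have sub0: "{c\<in>C. \<forall>j\<in>N. c j = 0} \<subseteq> {0}"
    proof
      fix c assume c: "c \<in> {c\<in>C. \<forall>j\<in>N. c j = 0}"
      have "c j = 0" for j using c assms(3) unfolding supp_in_def by (cases "j \<in> N") auto
      thus "c \<in> {0}" by (simp add: fun_eq_iff)
    qed
    have "card {c\<in>C. \<forall>j\<in>N. c j = 0} \<le> card {0::nat\<Rightarrow>'a}" by (rule card_mono[OF _ sub0]) simp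
    hence "card {c\<in>C. \<forall>j\<in>N. c j = 0} \<le> 1" by simp
    hence "card {c\<in>C. \<forall>j\<in>N. c j = 0} * ?q ^ card N \<le> 1 * ?q ^ card N" by (rule mult_le_mono1)
    moreover have "card C \<le> card {c\<in>C. \<forall>j\<in>N. c j = 0} * ?q ^ card N" using gen[of N] by simp
    ultimately have "?q ^ k \<le> ?q ^ card N" using assms(4) by linarith
    hence "k \<le> card N" using q2 by (simp add: power_le_imp_le_exp)
    thus ?thesis using False by linarith
  qed
qed



definition loc :: "nat \<Rightarrow> nat \<Rightarrow> nat set \<Rightarrow> (nat \<Rightarrow> 'a::zero) set \<Rightarrow> bool" where
  "loc r \<delta> N C \<longleftrightarrow> (\<forall>i\<in>N. \<exists>J. i \<in> J \<and> J \<subseteq> N \<and> card J \<le> r + \<delta> - 1 \<and> min_dist_ge (puncture J C) \<delta>)"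

lemma min_dist_ge_mono: "A \<subseteq> B \<Longrightarrow> min_dist_ge B \<delta> \<Longrightarrow> min_dist_ge A \<delta>"
  unfolding min_dist_ge_def by blast

lemma loc_transfer:
  assumes "finite N" "loc r \<delta> N C" "C' \<subseteq> C" "\<forall>c\<in>C'. \<forall>j\<in>S. c j = 0"
  shows "loc r \<delta> (N - S) C'"
  unfolding loc_def
proof
  fix i assume i: "i \<in> N - S"
  then obtain J where J: "i \<in> J" "J \<subseteq> N" "card J \<le> r + \<delta> - 1" "min_dist_ge (puncture J C) \<delta>"
    using assms(2) unfolding loc_def by blast
  have fJ: "finite J" using J(2) assms(1) finite_subset by blast
  have "card (J - S) \<le> card J" using fJ by (intro card_mono) auto
  moreover have "puncture (J - S) C' = puncture J C'"
    unfolding puncture_def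
  proof (rule image_cong[OF refl])
    fix c assume "c \<in> C'"
    hence "\<forall>j\<in>S. c j = 0" using assms(4) by blast
    thus "(\<lambda>j. if j \<in> J - S then c j else 0) = (\<lambda>j. if j \<in> J then c j else 0)"
      by (auto simp: fun_eq_iff)
  qed
  moreover have "puncture J C' \<subseteq> puncture J C" unfolding puncture_def using assms(3) by (rule image_mono)
  ultimately show "\<exists>J'. i \<in> J' \<and> J' \<subseteq> N - S \<and> card J' \<le> r + \<delta> - 1 \<and> min_dist_ge (puncture J' C') \<delta>"
    using J i min_dist_ge_mono by (intro exI[of _ "J - S"]) auto
qed

lemma sub_ker: "sub C \<Longrightarrow> sub {c\<in>C. \<forall>j\<in>S. c j = 0}"
  unfolding sub_def by (auto simp: vscale_apply)

lemma sub_punct: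
  assumes "sub C" shows "sub (puncture J C)"
proof -
  let ?m = "\<lambda>c. \<lambda>j. if j \<in> J then c j else (0::'a)"
  have a: "?m x + ?m y = ?m (x + y)" for x y by (auto simp: fun_eq_iff)
  have b: "vscale a (?m x) = ?m (vscale a x)" for a x by (auto simp: fun_eq_iff vscale_apply)
  have c: "?m 0 = 0" by (auto simp: fun_eq_iff)
  have s: "0 \<in> C" "\<And>x y. x \<in> C \<Longrightarrow> y \<in> C \<Longrightarrow> x + y \<in> C" "\<And>a x. x \<in> C \<Longrightarrow> vscale a x \<in> C"
    using assms unfolding sub_def by auto
  have "?m 0 \<in> ?m ` C" by (rule imageI[OF s(1)])
  hence "0 \<in> ?m ` C" unfolding c .
  moreover have "\<forall>x\<in>?m ` C. \<forall>y\<in>?m ` C. x + y \<in> ?m ` C"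
  proof (intro ballI)
    fix x y assume "x \<in> ?m ` C" "y \<in> ?m ` C"
    then obtain x0 y0 where xy: "x0 \<in> C" "y0 \<in> C" "x = ?m x0" "y = ?m y0" by blast
    have "x + y = ?m (x0 + y0)" unfolding xy(3,4) by (rule a)
    thus "x + y \<in> ?m ` C" by (intro rev_image_eqI[OF s(2)[OF xy(1,2)]])
  qed
  moreover have "\<forall>a. \<forall>x\<in>?m ` C. vscale a x \<in> ?m ` C"
  proof (intro allI ballI)
    fix a x assume "x \<in> ?m ` C"
    then obtain x0 where xy: "x0 \<in> C" "x = ?m x0" by blast
    have "vscale a x = ?m (vscale a x0)" unfolding xy(2) by (rule b)
    thus "vscale a x \<in> ?m ` C" by (intro rev_image_eqI[OF s(3)[OF xy(1)]])
  qed
  ultimately show ?thesis unfolding sub_def puncture_def by blast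
qed

lemma supp_punct: "supp_in J (puncture J C)"
  unfolding supp_in_def puncture_def by auto

lemma supp_ker: "supp_in N C \<Longrightarrow> supp_in (N - S) {c\<in>C. \<forall>j\<in>S. c j = 0}"
  unfolding supp_in_def by auto

lemma two_nonzero:
  fixes C :: "'b::zero set"
  assumes "0 \<in> C" "finite C" "card C \<ge> 2" shows "\<exists>c\<in>C. c \<noteq> 0"
proof (rule ccontr)
  assume "\<not> ?thesis"
  hence "C \<subseteq> {0}" by blast
  hence "card C \<le> card {0::'b}" by (rule card_mono[rotated]) simp
  thus False using assms(3) by simp
qed

lemma lrc:
  fixes C :: "(nat \<Rightarrow> 'a::{finite,field}) set"
  assumes "sub C" "finite N" "supp_in N C" "loc r \<delta> N C" "card C = card (UNIV::'a set) ^ k"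
    "m * r < k" "r \<ge> 1" "\<delta> \<ge> 1"
  shows "\<exists>c\<in>C. c \<noteq> 0 \<and> card {j. c j \<noteq> 0} + k + m * (\<delta> - 1) \<le> card N + 1"
  using assms
proof (induction m arbitrary: C N k)
  case 0
  then have "k \<ge> 1" by simp
  obtain c where c: "c\<in>C" "c \<noteq> 0" "card {j. c j \<noteq> 0} + k \<le> card N + 1"
    using singleton_bound[of C N k] 0 \<open>k \<ge> 1\<close> by blast
  have "card {j. c j \<noteq> 0} + k + 0 * (\<delta> - 1) \<le> card N + 1" using c(3) by simp
  then show ?case using c(1,2) by blast
next
  case (Suc m)
  let ?q = "card (UNIV::'a set)"
  have q2: "?q \<ge> 2" by (rule card_field_ge2)
  have k1: "k \<ge> 1" using Suc.prems(6) by simp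
  have fC: "finite C" using finite_supp_in Suc.prems(2,3) .
  have "?q ^ k \<ge> ?q" using k1 q2 by (metis One_nat_def power_increasing power_one_right le_trans one_le_numeral)
  hence "card C \<ge> 2" using q2 Suc.prems(5) by linarith
  moreover have "0 \<in> C" using Suc.prems(1) unfolding sub_def by blast
  ultimately obtain c0 where c0: "c0 \<in> C" "c0 \<noteq> 0" using two_nonzero fC by blast
  then obtain i where i: "c0 i \<noteq> 0" by (auto simp: fun_eq_iff)
  have iN: "i \<in> N" using i c0 Suc.prems(3) unfolding supp_in_def by blast
  obtain J where J: "i \<in> J" "J \<subseteq> N" "card J \<le> r + \<delta> - 1" "min_dist_ge (puncture J C) \<delta>"
    using Suc.prems(4) iN unfolding loc_def by blast
  have fJ: "finite J" using J(2) Suc.prems(2) finite_subset by blast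
  let ?P = "puncture J C"
  let ?K = "{c\<in>C. \<forall>j\<in>J. c j = 0}"
  have sP: "sub ?P" using sub_punct Suc.prems(1) .
  have sK: "sub ?K" using sub_ker Suc.prems(1) .
  have fP: "finite ?P" unfolding puncture_def using fC by simp
  have fK: "finite ?K" using fC by simp
  define \<rho> where "\<rho> = vs.dim ?P"
  define k' where "k' = vs.dim ?K"
  have cP: "card ?P = ?q ^ \<rho>" unfolding \<rho>_def using card_sub fP sP .
  have cK: "card ?K = ?q ^ k'" unfolding k'_def using card_sub fK sK .
  let ?m0 = "\<lambda>j. if j \<in> J then c0 j else 0"
  have m0P: "?m0 \<in> ?P" unfolding puncture_def using c0 by blast
  have m0nz: "?m0 \<noteq> 0" using i J(1) by (auto simp: fun_eq_iff)
  have zP: "0 \<in> ?P" using sP unfolding sub_def by blast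
  have "card {0, ?m0} \<le> card ?P" using m0P zP fP by (intro card_mono) auto
  hence "card ?P \<ge> 2" using m0nz by (metis card_2_iff)
  hence rho1: "\<rho> \<ge> 1"
  proof (rule contrapos_pp)
    assume "\<not> \<rho> \<ge> 1"
    hence "\<rho> = 0" by simp
    thus "\<not> card ?P \<ge> 2" using cP by simp
  qed
  obtain p where p: "p \<in> ?P" "p \<noteq> 0" "card {j. p j \<noteq> 0} + \<rho> \<le> card J + 1"
    using singleton_bound[OF sP fJ supp_punct cP rho1] by blast
  have "\<delta> \<le> hdist p 0" using J(4) p(1,2) zP unfolding min_dist_ge_def by blast
  hence dp: "\<delta> \<le> card {j. p j \<noteq> 0}" unfolding hdist_def by simp
  have rhoJ: "\<rho> + \<delta> \<le> card J + 1" using dp p(3) by linarith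
  hence rhor: "\<rho> \<le> r" using J(3) Suc.prems(8) by linarith
  have "card C \<le> card ?K * card ?P"
    unfolding puncture_def
  proof (rule fiber_bound[OF fC fK])
    fix x y assume xy: "x \<in> C" "y \<in> C" "(\<lambda>j. if j \<in> J then x j else 0) = (\<lambda>j. if j \<in> J then y j else 0)"
    have "\<forall>j\<in>J. (x - y) j = 0"
    proof
      fix j assume "j \<in> J"
      thus "(x - y) j = 0" using fun_cong[OF xy(3), of j] by simp
    qed
    thus "x - y \<in> ?K" using sub_diff[OF Suc.prems(1) xy(1,2)] by blast
  qed
  hence "?q ^ k \<le> ?q ^ (k' + \<rho>)" using cK cP Suc.prems(5) by (simp add: power_add)
  hence kk: "k \<le> k' + \<rho>" using q2 by (simp add: power_le_imp_le_exp)
  have mk: "m * r < k'" using Suc.prems(6) kk rhor by simp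
  have "\<exists>c\<in>?K. c \<noteq> 0 \<and> card {j. c j \<noteq> 0} + k' + m * (\<delta> - 1) \<le> card (N - J) + 1"
  proof (rule Suc.IH)
    show "sub ?K" by (rule sK)
    show "finite (N - J)" using Suc.prems(2) by simp
    show "supp_in (N - J) ?K" using supp_ker Suc.prems(3) .
    show "loc r \<delta> (N - J) ?K" by (rule loc_transfer[OF Suc.prems(2,4)]) auto
    show "card ?K = ?q ^ k'" by (rule cK)
    show "m * r < k'" by (rule mk)
    show "r \<ge> 1" by (rule Suc.prems(7))
    show "\<delta> \<ge> 1" by (rule Suc.prems(8))
  qed
  then obtain c where c: "c \<in> ?K" "c \<noteq> 0" "card {j. c j \<noteq> 0} + k' + m * (\<delta> - 1) \<le> card (N - J) + 1"
    by blast
  have cNJ: "card (N - J) = card N - card J" using J(2) fJ by (simp add: card_Diff_subset)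
  have JN: "card J \<le> card N" using J(2) Suc.prems(2) by (simp add: card_mono)
  have "card {j. c j \<noteq> 0} + k + Suc m * (\<delta> - 1) \<le> card N + 1"
    using c(3) cNJ JN kk rhoJ Suc.prems(8) by simp
  thus ?case using c(1,2) by blast
qed



lemma lin_code_D:
  assumes "lin_code n k C"
  shows "sub C" "supp_in {0..<n} C" "vs.dim C = k"
  using assms unfolding lin_code_def sub_def supp_in_def by auto

lemma card_lin_code:
  fixes C :: "(nat \<Rightarrow> 'a::{finite,field}) set"
  assumes "lin_code n k C"
  shows "card C = card (UNIV::'a set) ^ k" "finite C"
proof -
  show fC: "finite C" using finite_supp_in[OF _ lin_code_D(2)[OF assms]] by simp
  show "card C = card (UNIV::'a set) ^ k" using card_sub[OF fC lin_code_D(1)[OF assms]] lin_code_D(3)[OF assms] by simp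
qed

theorem mainTheorem1:
  fixes t nF kF r \<delta> :: nat
    and nI kI :: "nat \<Rightarrow> nat"
    and CI :: "nat \<Rightarrow> (nat \<Rightarrow> 'a::{finite,field}) set"
    and CF :: "(nat \<Rightarrow> 'a) set"
    and \<phi> :: "(nat \<Rightarrow> nat \<Rightarrow> 'a) \<Rightarrow> (nat \<Rightarrow> 'a)"
    and U R :: "nat \<Rightarrow> nat set" and \<sigma> :: "nat \<Rightarrow> nat \<Rightarrow> nat" and W :: "nat set"
  assumes "t \<ge> 2"
    and "gen_conv_code t nI kI CI nF kF CF \<phi> U \<sigma> W R"
    and "\<forall>i\<in>{1..t}. kI i \<ge> 1"
    and "r \<ge> 1" and "\<delta> \<ge> 2"
    and "has_locality nF CF r \<delta>"
    and "i \<in> {1..t}"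
  shows "int (card (U i)) \<le> int (kI i) + int nF - int kF - int (min_dist CF) + 1
           - (\<lceil>real (kF - kI i) / real r\<rceil> - 1) * (int \<delta> - 1)"
proof -
  let ?q = "card (UNIV::'a set)"
  have q2: "?q \<ge> 2" by (rule card_field_ge2)
  note G = assms(2)[unfolded gen_conv_code_def]
  have hlin: "\<forall>i\<in>{1..t}. lin_code (nI i) (kI i) (CI i)" by (rule G[THEN conjunct2, THEN conjunct1])
  have hlinF: "lin_code nF kF CF" by (rule G[THEN conjunct2, THEN conjunct2, THEN conjunct1])
  have hkF: "kF = (\<Sum>i=1..t. kI i)" by (rule G[THEN conjunct2, THEN conjunct2, THEN conjunct2, THEN conjunct1])
  have hadd: "\<forall>c\<in>tuples t CI. \<forall>d\<in>tuples t CI. \<phi> (c + d) = \<phi> c + \<phi> d" by (rule G[THEN conjunct2, THEN conjunct2, THEN conjunct2, THEN conjunct2, THEN conjunct1])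
  have hsc: "\<forall>a. \<forall>c\<in>tuples t CI. \<phi> (\<lambda>i. vscale a (c i)) = vscale a (\<phi> c)" by (rule G[THEN conjunct2, THEN conjunct2, THEN conjunct2, THEN conjunct2, THEN conjunct2, THEN conjunct1])
  have hbij: "bij_betw \<phi> (tuples t CI) CF" by (rule G[THEN conjunct2, THEN conjunct2, THEN conjunct2, THEN conjunct2, THEN conjunct2, THEN conjunct2, THEN conjunct1])
  have hU: "\<forall>i\<in>{1..t}. U i \<subseteq> {0..<nI i}" by (rule G[THEN conjunct2, THEN conjunct2, THEN conjunct2, THEN conjunct2, THEN conjunct2, THEN conjunct2, THEN conjunct2, THEN conjunct1])
  have hsig: "\<forall>i\<in>{1..t}. \<forall>u\<in>U i. \<sigma> i u < nF" by (rule G[THEN conjunct2, THEN conjunct2, THEN conjunct2, THEN conjunct2, THEN conjunct2, THEN conjunct2, THEN conjunct2, THEN conjunct2, THEN conjunct1])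
  have hinj: "\<forall>i\<in>{1..t}. \<forall>j\<in>{1..t}. \<forall>u\<in>U i. \<forall>v\<in>U j. \<sigma> i u = \<sigma> j v \<longrightarrow> i = j \<and> u = v" by (rule G[THEN conjunct2, THEN conjunct2, THEN conjunct2, THEN conjunct2, THEN conjunct2, THEN conjunct2, THEN conjunct2, THEN conjunct2, THEN conjunct2, THEN conjunct1])
  have hunch: "\<forall>c\<in>tuples t CI. \<forall>i\<in>{1..t}. \<forall>u\<in>U i. \<phi> c (\<sigma> i u) = c i u" by (rule G[THEN conjunct2, THEN conjunct2, THEN conjunct2, THEN conjunct2, THEN conjunct2, THEN conjunct2, THEN conjunct2, THEN conjunct2, THEN conjunct2, THEN conjunct2, THEN conjunct1])
  have i: "i \<in> {1..t}" by (rule assms(7))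
  define T where "T = tuples t CI"
  define T0 where "T0 = {c\<in>T. c i = 0}"
  define C' where "C' = \<phi> ` T0"
  have subI: "sub (CI j)" if "j \<in> {1..t}" for j using lin_code_D(1) hlin that by blast
  have T0sub: "T0 \<subseteq> T" unfolding T0_def by blast
  have Tadd: "c + d \<in> T" if "c \<in> T" "d \<in> T" for c d
    using that subI unfolding T_def tuples_def sub_def by auto
  have Tsc: "(\<lambda>j. vscale a (c j)) \<in> T" if "c \<in> T" for a c
  proof -
    have "vscale a (0::nat\<Rightarrow>'a) = 0" by (simp add: fun_eq_iff vscale_apply)
    thus ?thesis using that subI unfolding T_def tuples_def sub_def by auto
  qed
  have T0mem: "0 \<in> T" using subI unfolding T_def tuples_def sub_def by auto
  have Tupd: "c(i := x) \<in> T" if "c \<in> T" "x \<in> CI i" for c x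
    using that i unfolding T_def tuples_def by auto
  have cCI: "card (CI j) = ?q ^ kI j" "finite (CI j)" if "j \<in> {1..t}" for j
    using card_lin_code hlin that by blast+
  have cCF: "card CF = ?q ^ kF" "finite CF" using card_lin_code[OF hlinF] by auto
  have "bij_betw (\<lambda>c. (c(i := 0), c i)) T (T0 \<times> CI i)"
  proof (rule bij_betwI')
    fix x y assume "x \<in> T" "y \<in> T"
    show "((x(i := 0), x i) = (y(i := 0), y i)) = (x = y)"
      by (metis fun_upd_triv fun_upd_upd prod.inject)
  next
    fix x assume x: "x \<in> T"
    have "x(i := 0) \<in> T" using Tupd[OF x] subI[OF i] unfolding sub_def by blast
    moreover have "x i \<in> CI i" using x i unfolding T_def tuples_def by blast
    ultimately show "(x(i := 0), x i) \<in> T0 \<times> CI i" unfolding T0_def by simp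
  next
    fix y assume "y \<in> T0 \<times> CI i"
    then obtain d x where y: "y = (d, x)" "d \<in> T0" "x \<in> CI i" by blast
    have "d(i := x) \<in> T" using Tupd y T0sub by blast
    moreover have "y = ((d(i := x))(i := 0), (d(i := x)) i)" using y unfolding T0_def by auto
    ultimately show "\<exists>x\<in>T. y = (x(i := 0), x i)" by blast
  qed
  hence "card T = card (T0 \<times> CI i)" by (rule bij_betw_same_card)
  hence cT: "card T = card T0 * card (CI i)" by (simp add: card_cartesian_product)
  have cTF: "card CF = card T" using bij_betw_same_card[OF hbij] unfolding T_def by simp
  have injT0: "inj_on \<phi> T0" using bij_betw_imp_inj_on[OF hbij] T0sub unfolding T_def by (rule inj_on_subset)
  have cC': "card C' = card T0" unfolding C'_def using injT0 by (rule card_image)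
  have C'sub: "C' \<subseteq> CF" unfolding C'_def using bij_betw_imp_surj_on[OF hbij] T0sub unfolding T_def by blast
  have fC': "finite C'" using C'sub cCF(2) finite_subset by blast
  have phi0: "\<phi> 0 = 0"
  proof -
    have "\<phi> (0 + 0) = \<phi> 0 + \<phi> 0" using hadd T0mem unfolding T_def by blast
    thus ?thesis by simp
  qed
  have sC': "sub C'"
    unfolding sub_def
  proof (intro conjI ballI allI)
    have "0 \<in> T0" using T0mem unfolding T0_def by simp
    thus "0 \<in> C'" unfolding C'_def using phi0 by (metis image_eqI)
  next
    fix x y assume "x \<in> C'" "y \<in> C'"
    then obtain c d where cd: "c \<in> T0" "d \<in> T0" "x = \<phi> c" "y = \<phi> d" unfolding C'_def by blast
    have "c + d \<in> T0" using cd Tadd unfolding T0_def by simp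
    moreover have "\<phi> (c + d) = \<phi> c + \<phi> d" using hadd cd(1,2) T0sub unfolding T_def by blast
    hence "x + y = \<phi> (c + d)" using cd(3,4) by simp
    ultimately show "x + y \<in> C'" unfolding C'_def by blast
  next
    fix a x assume "x \<in> C'"
    then obtain c where c: "c \<in> T0" "x = \<phi> c" unfolding C'_def by blast
    have "(\<lambda>j. vscale a (c j)) \<in> T0" using c Tsc unfolding T0_def by (simp add: fun_eq_iff vscale_apply)
    moreover have "\<phi> (\<lambda>j. vscale a (c j)) = vscale a (\<phi> c)" using hsc c(1) T0sub unfolding T_def by blast
    hence "vscale a x = \<phi> (\<lambda>j. vscale a (c j))" using c(2) by simp
    ultimately show "vscale a x \<in> C'" unfolding C'_def by blast
  qed
  define k' where "k' = vs.dim C'"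
  have cC'2: "card C' = ?q ^ k'" unfolding k'_def using card_sub[OF fC' sC'] .
  have "?q ^ kF = ?q ^ (k' + kI i)" using cCF(1) cTF cT cC' cC'2 cCI[OF i] by (simp add: power_add)
  hence kFeq: "kF = k' + kI i" using q2 by (simp add: power_inject_exp)
  obtain j2 where j2: "j2 \<in> {1..t}" "j2 \<noteq> i"
  proof (cases "i = 1")
    case True thus ?thesis using that[of 2] assms(1) by auto
  next
    case False thus ?thesis using that[of 1] assms(1) i by auto
  qed
  have "kI i + kI j2 = (\<Sum>j\<in>{i, j2}. kI j)" using j2 by simp
  also have "\<dots> \<le> (\<Sum>j=1..t. kI j)" using i j2 by (intro sum_mono2) auto
  finally have "kI i + kI j2 \<le> kF" using hkF by simp
  hence k'1: "k' \<ge> 1" using kFeq assms(3) j2 by fastforce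
  define S where "S = \<sigma> i ` U i"
  define N where "N = {0..<nF} - S"
  have C'vanS: "\<forall>c\<in>C'. \<forall>j\<in>S. c j = 0"
  proof (intro ballI)
    fix c j assume c: "c \<in> C'" and j: "j \<in> S"
    then obtain d where d: "d \<in> T0" "c = \<phi> d" unfolding C'_def by blast
    obtain u where u: "u \<in> U i" "j = \<sigma> i u" using j unfolding S_def by blast
    have "\<phi> d (\<sigma> i u) = d i u" using hunch d(1) T0sub i u(1) unfolding T_def by blast
    thus "c j = 0" using d u unfolding T0_def by simp
  qed
  have suppC': "supp_in N C'"
    unfolding supp_in_def N_def
  proof (intro ballI allI impI)
    fix c j assume c: "c \<in> C'" and j: "j \<notin> {0..<nF} - S"
    show "c j = 0"
    proof (cases "j \<in> S")
      case True thus ?thesis using C'vanS c by blast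
    next
      case False
      hence "nF \<le> j" using j by simp
      thus ?thesis using c C'sub hlinF unfolding lin_code_def by blast
    qed
  qed
  have locF: "loc r \<delta> {0..<nF} CF" using assms(6) unfolding has_locality_def loc_def by auto
  have locC': "loc r \<delta> N C'" unfolding N_def by (rule loc_transfer[OF _ locF C'sub C'vanS]) simp
  define m where "m = nat (\<lceil>real k' / real r\<rceil> - 1)"
  have pos: "0 < real k' / real r" using k'1 assms(4) by simp
  hence cpos: "\<lceil>real k' / real r\<rceil> \<ge> 1" using zero_less_ceiling by (metis int_one_le_iff_zero_less)
  hence mint: "int m = \<lceil>real k' / real r\<rceil> - 1" unfolding m_def by simp
  have "real m < real k' / real r"
  proof -
    have "real_of_int \<lceil>real k' / real r\<rceil> - 1 < real k' / real r" using ceiling_correct by blast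
    moreover have "real m = real_of_int \<lceil>real k' / real r\<rceil> - 1" using mint by (metis of_int_of_nat_eq of_int_diff of_int_1)
    ultimately show ?thesis by simp
  qed
  hence "real m * real r < real k'" using assms(4) by (simp add: pos_less_divide_eq)
  hence mr: "m * r < k'" by (metis of_nat_less_iff of_nat_mult)
  obtain c where c: "c \<in> C'" "c \<noteq> 0" "card {j. c j \<noteq> 0} + k' + m * (\<delta> - 1) \<le> card N + 1"
    using lrc[OF sC' _ suppC' locC' cC'2 mr assms(4)] assms(5) unfolding N_def by auto
  have injs: "inj_on (\<sigma> i) (U i)" using hinj i by (intro inj_onI) blast
  have Ssub: "S \<subseteq> {0..<nF}" using hsig i unfolding S_def by auto
  have cS: "card S = card (U i)" unfolding S_def using injs by (rule card_image)
  have cN: "card N = nF - card (U i)" unfolding N_def using Ssub cS by (simp add: card_Diff_subset finite_subset)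
  have UnF: "card (U i) \<le> nF" using cS Ssub by (metis card_atLeastLessThan card_mono finite_atLeastLessThan diff_zero)
  have fin: "finite {hdist x y |x y. x \<in> CF \<and> y \<in> CF \<and> x \<noteq> y}"
    by (rule finite_subset[of _ "(\<lambda>(x,y). hdist x y) ` (CF \<times> CF)"]) (auto simp: cCF(2))
  have "0 \<in> CF" using hlinF unfolding lin_code_def by blast
  hence "hdist c 0 \<in> {hdist x y |x y. x \<in> CF \<and> y \<in> CF \<and> x \<noteq> y}" using c(1,2) C'sub by blast
  hence "min_dist CF \<le> hdist c 0" unfolding min_dist_def using fin by simp
  hence dle: "min_dist CF \<le> card {j. c j \<noteq> 0}" unfolding hdist_def by simp
  have kk: "kF - kI i = k'" using kFeq by simp
  have A: "int (min_dist CF) + int k' + int m * (int \<delta> - 1) \<le> int nF - int (card (U i)) + 1"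
  proof -
    have "int (card {j. c j \<noteq> 0} + k' + m * (\<delta> - 1)) \<le> int (card N + 1)" using c(3) by linarith
    hence "int (card {j. c j \<noteq> 0}) + int k' + int m * int (\<delta> - 1) \<le> int (card N) + 1" by simp
    moreover have "int (\<delta> - 1) = int \<delta> - 1" using assms(5) by simp
    moreover have "int (card N) = int nF - int (card (U i))" using cN UnF by simp
    ultimately show ?thesis using dle by simp
  qed
  show ?thesis unfolding kk using A mint kFeq by simp
qed

end
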